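(* Let $L$ be a finite distributive lattice with rank function $r$, and let $\alpha,\beta,\gamma,\delta: L \to [0,\infty)$ satisfy \[ \alpha(x)\beta(y) \leq \gamma(x \vee y)\,\delta(x \wedge y) \quad \text{for all } x,y \in L. \] Then for all subsets $X,Y \subseteq L$, \[ \Big(\sum_{x \in X} \alpha(x)q^{r(x)}\Big)\Big( \sum_{x \in Y} \beta(x)q^{r(x)}\Big) \ll \Big(\sum_{x \in X \vee Y} \gamma(x)q^{r(x)}\Big)\Big( \sum_{x \in X \wedge Y} \delta(x)q^{r(x)}\Big), \] as polynomials in the indeterminate $q$.
   Context: For a finite lattice $L$ and $x \in L$, the rank $r(x)$ is the length (number of strict inequalities) of a longest chain in $L$ having $x$ as its maximal element; so the minimum element has rank $0$. For $X,Y \subseteq L$, $X \vee Y = \{x \vee y : x \in X, y \in Y\}$ and $X \wedge Y = \{x \wedge y : x \in X, y \in Y\}$. For real polynomials $P(q),R(q)$, $P(q) \ll R(q)$ means that every coefficient of $R(q)-P(q)$ is a non-negative real number. *)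

theory Defs
  imports "HOL-Computational_Algebra.Polynomial"
begin

definition lat_rank :: "'a::{finite, lattice} \<Rightarrow> nat" where
  "lat_rank x = Max {length cs - 1 | cs. cs \<noteq> [] \<and> sorted_wrt (<) cs \<and> last cs = x}"

definition set_sup :: "'a::lattice set \<Rightarrow> 'a set \<Rightarrow> 'a set" where
  "set_sup X Y = {sup x y | x y. x \<in> X \<and> y \<in> Y}"

definition set_inf :: "'a::lattice set \<Rightarrow> 'a set \<Rightarrow> 'a set" where
  "set_inf X Y = {inf x y | x y. x \<in> X \<and> y \<in> Y}"

definition rank_gen_poly :: "('a::{finite, lattice} \<Rightarrow> real) \<Rightarrow> 'a set \<Rightarrow> real poly" where
  "rank_gen_poly f X = (\<Sum>x\<in>X. monom (f x) (lat_rank x))"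

definition poly_coeff_le :: "real poly \<Rightarrow> real poly \<Rightarrow> bool" (infix "\<lless>\<^sub>c" 50) where
  "poly_coeff_le P R \<longleftrightarrow> (\<forall>n. 0 \<le> coeff (R - P) n)"

end

theory Submission
  imports Defs
begin


definition jp :: "'a::distrib_lattice \<Rightarrow> bool" where
  "jp j \<longleftrightarrow> (\<exists>z. \<not> j \<le> z) \<and> (\<forall>a b. j \<le> sup a b \<longrightarrow> j \<le> a \<or> j \<le> b)"

definition phi :: "'a::distrib_lattice \<Rightarrow> 'a set" where
  "phi x = {j. jp j \<and> j \<le> x}"

lemma phi_sup: "phi (sup x y) = phi x \<union> phi y"
  unfolding phi_def jp_def by (auto intro: le_supI1 le_supI2)

lemma phi_inf: "phi (inf x y) = phi x \<inter> phi y"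
  unfolding phi_def by auto

lemma rep:
  fixes x z :: "'a::{finite,distrib_lattice}"
  shows "(\<forall>j. jp j \<and> j \<le> x \<longrightarrow> j \<le> z) \<Longrightarrow> x \<le> z"
proof (induction "card {y. y \<le> x}" arbitrary: x rule: less_induct)
  case (less x)
  show ?case
  proof (cases "jp x")
    case True thus ?thesis using less.prems by auto
  next
    case False
    show ?thesis
    proof (cases "\<exists>z. \<not> x \<le> z")
      case False thus ?thesis by auto
    next
      case True
      with \<open>\<not> jp x\<close> obtain a b where ab: "x \<le> sup a b" "\<not> x \<le> a" "\<not> x \<le> b" unfolding jp_def by auto
      have xe: "x = sup (inf x a) (inf x b)" using ab(1) by (metis inf.absorb1 inf_sup_distrib1)
      have "inf x a \<le> z"
      proof (rule less.hyps)
        show "card {y. y \<le> inf x a} < card {y. y \<le> x}"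
          by (rule psubset_card_mono) (use ab(2) in \<open>auto intro: order_trans\<close>)
        show "\<forall>j. jp j \<and> j \<le> inf x a \<longrightarrow> j \<le> z" using less.prems by auto
      qed
      moreover have "inf x b \<le> z"
      proof (rule less.hyps)
        show "card {y. y \<le> inf x b} < card {y. y \<le> x}"
          by (rule psubset_card_mono) (use ab(3) in \<open>auto intro: order_trans\<close>)
        show "\<forall>j. jp j \<and> j \<le> inf x b \<longrightarrow> j \<le> z" using less.prems by auto
      qed
      ultimately show ?thesis by (subst xe) simp
    qed
  qed
qed

lemma phi_le:
  fixes x y :: "'a::{finite,distrib_lattice}"
  shows "phi x \<subseteq> phi y \<Longrightarrow> x \<le> y"
  by (rule rep) (auto simp: phi_def)

lemma phi_inj: "inj (phi :: 'a::{finite,distrib_lattice} \<Rightarrow> _)"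
  by (rule injI) (metis order.antisym order_refl phi_le)

lemma phi_mono: "x \<le> y \<Longrightarrow> phi x \<subseteq> phi y"
  unfolding phi_def by auto

lemma phi_strict:
  fixes x y :: "'a::{finite,distrib_lattice}"
  assumes "x < y" shows "phi x \<subset> phi y"
proof -
  have "phi x \<subseteq> phi y" using assms by (simp add: phi_mono)
  moreover have "phi x \<noteq> phi y" using assms injD[OF phi_inj, of x y] by auto
  ultimately show ?thesis by auto
qed

lemma sorted_last: "sorted_wrt (<) cs \<Longrightarrow> a \<in> set cs \<Longrightarrow> a \<le> (last cs :: 'a::order)"
proof (induction cs)
  case Nil thus ?case by simp
next
  case (Cons c cs)
  show ?case
  proof (cases "cs = []")
    case True thus ?thesis using Cons by simp
  next
    case False
    then have l: "last cs \<in> set cs" by simp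
    show ?thesis
    proof (cases "a = c")
      case True
      then have "a < last cs" using Cons.prems(1) l by simp
      thus ?thesis using False by simp
    next
      case False
      thus ?thesis using Cons \<open>cs \<noteq> []\<close> by simp
    qed
  qed
qed

lemma chain_bound:
  fixes cs :: "'a::{finite,distrib_lattice} list"
  shows "sorted_wrt (<) cs \<Longrightarrow> cs \<noteq> [] \<Longrightarrow> length cs - 1 \<le> card (phi (last cs))"
proof (induction cs rule: rev_induct)
  case Nil thus ?case by simp
next
  case (snoc c cs)
  show ?case
  proof (cases "cs = []")
    case True thus ?thesis by simp
  next
    case False
    have s: "sorted_wrt (<) cs" using snoc.prems by (simp add: sorted_wrt_append)
    have "last cs < c" using snoc.prems False by (simp add: sorted_wrt_append)
    then have "card (phi (last cs)) < card (phi c)"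
      using phi_strict by (intro psubset_card_mono) auto
    thus ?thesis using snoc.IH[OF s False] by simp
  qed
qed

lemma bot_ex: "\<exists>b::'a::{finite,distrib_lattice}. \<forall>z. b \<le> z"
  by (rule exI[of _ "Inf_fin UNIV"]) (auto intro: Inf_fin.coboundedI)

lemma join_ex:
  fixes S :: "'a::{finite,distrib_lattice} set"
  shows "\<exists>y. \<forall>k. jp k \<longrightarrow> (k \<le> y \<longleftrightarrow> (\<exists>s\<in>S. k \<le> s))"
proof -
  have "finite S" by simp
  thus ?thesis
  proof (induction S rule: finite_induct)
    case empty
    obtain b :: 'a where b: "\<forall>z. b \<le> z" using bot_ex by blast
    show ?case
    proof (rule exI[of _ b], intro allI impI)
      fix k :: 'a assume "jp k"
      then obtain z where "\<not> k \<le> z" unfolding jp_def by auto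
      thus "(k \<le> b) = (\<exists>s\<in>{}. k \<le> s)" using b by (auto intro: order_trans)
    qed
  next
    case (insert s S)
    then obtain y where y: "\<forall>k. jp k \<longrightarrow> (k \<le> y \<longleftrightarrow> (\<exists>s\<in>S. k \<le> s))" by blast
    show ?case
    proof (rule exI[of _ "sup s y"], intro allI impI)
      fix k :: 'a assume k: "jp k"
      have "k \<le> sup s y \<longleftrightarrow> k \<le> s \<or> k \<le> y" using k unfolding jp_def by (auto intro: le_supI1 le_supI2)
      thus "(k \<le> sup s y) = (\<exists>s'\<in>insert s S. k \<le> s')" using y k by auto
    qed
  qed
qed

lemma chain_ex:
  fixes x :: "'a::{finite,distrib_lattice}"
  shows "\<exists>cs. cs \<noteq> [] \<and> sorted_wrt (<) cs \<and> last cs = x \<and> length cs - 1 = card (phi x)"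
proof (induction "card (phi x)" arbitrary: x)
  case 0
  thus ?case by (intro exI[of _ "[x]"]) simp
next
  case (Suc n x)
  have fin: "finite (phi x)" by simp
  have ne: "phi x \<noteq> {}" using Suc.hyps(2) by auto
  obtain j where j: "j \<in> phi x" and jmax: "\<forall>k\<in>phi x. j \<le> k \<longrightarrow> j = k"
    using finite_has_maximal[OF fin ne] by blast
  obtain y :: 'a where y: "\<forall>k. jp k \<longrightarrow> (k \<le> y \<longleftrightarrow> (\<exists>s\<in>phi x - {j}. k \<le> s))"
    using join_ex by blast
  have py: "phi y = phi x - {j}"
  proof
    show "phi y \<subseteq> phi x - {j}"
    proof
      fix k assume "k \<in> phi y"
      then have k: "jp k" "k \<le> y" unfolding phi_def by auto
      then obtain s where s: "s \<in> phi x - {j}" "k \<le> s" using y by auto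
      then have "k \<le> x" unfolding phi_def by auto
      moreover have "k \<noteq> j" using s jmax by auto
      ultimately show "k \<in> phi x - {j}" using k unfolding phi_def by auto
    qed
    show "phi x - {j} \<subseteq> phi y"
      using y unfolding phi_def by auto
  qed
  have "y \<le> x" using py phi_le[of y x] by auto
  moreover have "y \<noteq> x" using py j by auto
  ultimately have yx: "y < x" by simp
  have "card (phi y) = n" using py j Suc.hyps(2) by (simp add: card_Diff_singleton)
  then obtain cs where cs: "cs \<noteq> []" "sorted_wrt (<) cs" "last cs = y" "length cs - 1 = n"
    using Suc.hyps(1) by blast
  have "sorted_wrt (<) (cs @ [x])"
    using cs yx sorted_last[OF cs(2)] by (auto simp: sorted_wrt_append intro: order_le_less_trans)
  thus ?case using cs Suc.hyps(2) by (intro exI[of _ "cs @ [x]"]) auto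
qed

lemma rank_phi:
  fixes x :: "'a::{finite,distrib_lattice}"
  shows "lat_rank x = card (phi x)"
proof -
  let ?A = "{length cs - 1 |cs. cs \<noteq> [] \<and> sorted_wrt (<) cs \<and> last cs = (x::'a)}"
  have bnd: "\<forall>y\<in>?A. y \<le> card (phi x)"
  proof
    fix y assume "y \<in> ?A"
    then obtain cs where "y = length cs - 1" "cs \<noteq> []" "sorted_wrt (<) cs" "last cs = x" by blast
    thus "y \<le> card (phi x)" using chain_bound[of cs] by simp
  qed
  have fin: "finite ?A"
    by (rule finite_subset[of _ "{..card (phi x)}"]) (use bnd in blast, simp)
  obtain cs where cs: "cs \<noteq> [] \<and> sorted_wrt (<) cs \<and> last cs = x \<and> length cs - 1 = card (phi x)"
    using chain_ex[of x] by blast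
  have mem: "card (phi x) \<in> ?A" unfolding mem_Collect_eq by (rule exI[of _ cs]) (use cs in auto)
  show ?thesis unfolding lat_rank_def
    by (rule Max_eqI[OF fin]) (use bnd mem in auto)
qed

lemma rank_mod:
  fixes x y :: "'a::{finite,distrib_lattice}"
  shows "lat_rank (sup x y) + lat_rank (inf x y) = lat_rank x + lat_rank y"
  unfolding rank_phi phi_sup phi_inf by (rule card_Un_Int[symmetric]) simp_all



lemma ad_base:
  fixes a0 a1 b0 b1 c0 c1 d0 d1 :: real
  assumes nn: "0 \<le> a0" "0 \<le> a1" "0 \<le> b0" "0 \<le> b1" "0 \<le> c0" "0 \<le> c1" "0 \<le> d0" "0 \<le> d1"
    and h: "a0*b0 \<le> c0*d0" "a0*b1 \<le> c1*d0" "a1*b0 \<le> c1*d0" "a1*b1 \<le> c1*d1"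
  shows "(a0+a1)*(b0+b1) \<le> (c0+c1)*(d0+d1)"
proof -
  have mid: "a0*b1 + a1*b0 \<le> c1*d0 + c0*d1"
  proof (cases "c1*d0 = 0")
    case True
    then have "a0*b1 = 0" "a1*b0 = 0" using h nn by (smt (verit) mult_nonneg_nonneg)+
    thus ?thesis using True mult_nonneg_nonneg[OF nn(5) nn(8)] by linarith
  next
    case False
    define p where "p = c1*d0"
    have pp: "p > 0" using False nn unfolding p_def by (simp add: less_le)
    have st: "(a0*b1)*(a1*b0) \<le> p*(c0*d1)"
    proof -
      have "(a0*b1)*(a1*b0) = (a0*b0)*(a1*b1)" by (simp add: algebra_simps)
      also have "\<dots> \<le> (c0*d0)*(c1*d1)" by (rule mult_mono) (use h nn in auto)
      also have "\<dots> = p*(c0*d1)" unfolding p_def by (simp add: algebra_simps)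
      finally show ?thesis .
    qed
    have "0 \<le> (p - a0*b1)*(p - a1*b0)" using h unfolding p_def by (intro mult_nonneg_nonneg) auto
    then have "p*(a0*b1 + a1*b0) \<le> p*p + (a0*b1)*(a1*b0)" by (simp add: algebra_simps)
    also have "\<dots> \<le> p*(p + c0*d1)" using st by (simp add: algebra_simps)
    finally have "p*(a0*b1 + a1*b0) \<le> p*(p + c0*d1)" .
    then have "a0*b1 + a1*b0 \<le> p + c0*d1" using pp by (simp add: mult_le_cancel_left)
    thus ?thesis unfolding p_def by simp
  qed
  have "(a0+a1)*(b0+b1) = a0*b0 + (a0*b1 + a1*b0) + a1*b1" by (simp add: algebra_simps)
  also have "\<dots> \<le> c0*d0 + (c1*d0 + c0*d1) + c1*d1" using h(1) h(4) mid by linarith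
  also have "\<dots> \<le> (c0+c1)*(d0+d1)" by (simp add: algebra_simps)
  finally show ?thesis .
qed

lemma sum_pow_insert:
  assumes "finite F" "a \<notin> F"
  shows "sum f (Pow (insert a F)) = (\<Sum>S\<in>Pow F. f S + f (insert a S))"
proof -
  have inj: "inj_on (insert a) (Pow F)" using assms(2) by (auto intro!: inj_onI)
  have disj: "Pow F \<inter> insert a ` Pow F = {}" using assms(2) by auto
  have "sum f (Pow (insert a F)) = sum f (Pow F) + sum f (insert a ` Pow F)"
    unfolding Pow_insert using assms(1) disj by (intro sum.union_disjoint) auto
  also have "sum f (insert a ` Pow F) = (\<Sum>S\<in>Pow F. f (insert a S))"
    using inj by (simp add: sum.reindex)
  finally show ?thesis by (simp add: sum.distrib)
qed

lemma ad_pow: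
  fixes f1 f2 f3 f4 :: "'b set \<Rightarrow> real"
  assumes "finite A"
  shows "(\<forall>S\<subseteq>A. \<forall>T\<subseteq>A. 0 \<le> f1 S \<and> 0 \<le> f2 S \<and> 0 \<le> f3 S \<and> 0 \<le> f4 S \<and>
            f1 S * f2 T \<le> f3 (S\<union>T) * f4 (S\<inter>T)) \<Longrightarrow>
         sum f1 (Pow A) * sum f2 (Pow A) \<le> sum f3 (Pow A) * sum f4 (Pow A)"
  using assms
proof (induction A arbitrary: f1 f2 f3 f4 rule: finite_induct)
  case empty
  thus ?case by simp
next
  case (insert a F)
  let ?g1 = "\<lambda>S. f1 S + f1 (insert a S)"
  let ?g2 = "\<lambda>S. f2 S + f2 (insert a S)"
  let ?g3 = "\<lambda>S. f3 S + f3 (insert a S)"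
  let ?g4 = "\<lambda>S. f4 S + f4 (insert a S)"
  have P: "\<forall>S\<subseteq>insert a F. \<forall>T\<subseteq>insert a F. 0 \<le> f1 S \<and> 0 \<le> f2 S \<and> 0 \<le> f3 S \<and> 0 \<le> f4 S \<and>
            f1 S * f2 T \<le> f3 (S\<union>T) * f4 (S\<inter>T)" by fact
  have "sum ?g1 (Pow F) * sum ?g2 (Pow F) \<le> sum ?g3 (Pow F) * sum ?g4 (Pow F)"
  proof (rule insert.IH, intro allI impI conjI)
    fix S T assume S: "S \<subseteq> F" and T: "T \<subseteq> F"
    have S': "S \<subseteq> insert a F" "insert a S \<subseteq> insert a F" using S by auto
    have T': "T \<subseteq> insert a F" "insert a T \<subseteq> insert a F" using T by auto
    have aS: "a \<notin> S" "a \<notin> T" using S T insert.hyps(2) by auto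
    show "0 \<le> ?g1 S" "0 \<le> ?g2 S" "0 \<le> ?g3 S" "0 \<le> ?g4 S"
      using P S'(1) S'(2) by (meson add_nonneg_nonneg)+
    have e1: "S \<union> insert a T = insert a (S \<union> T)" "S \<inter> insert a T = S \<inter> T"
      "insert a S \<union> T = insert a (S \<union> T)" "insert a S \<inter> T = S \<inter> T"
      "insert a S \<union> insert a T = insert a (S \<union> T)" "insert a S \<inter> insert a T = insert a (S \<inter> T)"
      using aS by auto
    show "?g1 S * ?g2 T \<le> ?g3 (S \<union> T) * ?g4 (S \<inter> T)"
    proof (rule ad_base)
      show "f1 S * f2 T \<le> f3 (S \<union> T) * f4 (S \<inter> T)" using P S'(1) T'(1) by blast
      show "f1 S * f2 (insert a T) \<le> f3 (insert a (S \<union> T)) * f4 (S \<inter> T)"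
        using P S'(1) T'(2) e1 by metis
      show "f1 (insert a S) * f2 T \<le> f3 (insert a (S \<union> T)) * f4 (S \<inter> T)"
        using P S'(2) T'(1) e1 by metis
      show "f1 (insert a S) * f2 (insert a T) \<le> f3 (insert a (S \<union> T)) * f4 (insert a (S \<inter> T))"
        using P S'(2) T'(2) e1 by metis
      have U: "S \<union> T \<subseteq> insert a F" "insert a (S \<union> T) \<subseteq> insert a F"
        "S \<inter> T \<subseteq> insert a F" "insert a (S \<inter> T) \<subseteq> insert a F" using S T by auto
      show "0 \<le> f1 S" "0 \<le> f1 (insert a S)" "0 \<le> f2 T" "0 \<le> f2 (insert a T)"
        "0 \<le> f3 (S \<union> T)" "0 \<le> f3 (insert a (S \<union> T))" "0 \<le> f4 (S \<inter> T)" "0 \<le> f4 (insert a (S \<inter> T))"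
        using P S' T' U by blast+
    qed
  qed
  thus ?case using insert.hyps by (simp add: sum_pow_insert)
qed

lemma ad_lat:
  fixes f1 f2 f3 f4 :: "'a::{finite,distrib_lattice} \<Rightarrow> real"
  assumes nn: "\<And>x. 0 \<le> f1 x" "\<And>x. 0 \<le> f2 x" "\<And>x. 0 \<le> f3 x" "\<And>x. 0 \<le> f4 x"
    and h: "\<And>x y. f1 x * f2 y \<le> f3 (sup x y) * f4 (inf x y)"
  shows "sum f1 UNIV * sum f2 UNIV \<le> sum f3 UNIV * sum f4 UNIV"
proof -
  define J where "J = {j::'a. jp j}"
  define ext where "ext = (\<lambda>(g::'a \<Rightarrow> real) S. if S \<in> range phi then g (inv phi S) else 0)"
  have ext_phi: "ext g (phi x) = g x" for g x
    unfolding ext_def by (simp add: inv_f_f[OF phi_inj])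
  have rng: "range phi \<subseteq> Pow J" unfolding J_def phi_def by auto
  have sumext: "sum (ext g) (Pow J) = sum g UNIV" for g
  proof -
    have "sum (ext g) (Pow J) = sum (ext g) (range phi)"
      using rng by (intro sum.mono_neutral_right) (auto simp: ext_def)
    also have "\<dots> = sum (ext g \<circ> phi) UNIV" by (rule sum.reindex[OF phi_inj])
    also have "\<dots> = sum g UNIV" by (simp add: ext_phi o_def)
    finally show ?thesis .
  qed
  have nne: "0 \<le> ext g S" if "\<And>x. 0 \<le> g x" for g S
    unfolding ext_def using that by auto
  have "sum (ext f1) (Pow J) * sum (ext f2) (Pow J) \<le> sum (ext f3) (Pow J) * sum (ext f4) (Pow J)"
  proof (rule ad_pow, simp, intro allI impI conjI)
    fix S T assume "S \<subseteq> J" "T \<subseteq> J"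
    show "0 \<le> ext f1 S" "0 \<le> ext f2 S" "0 \<le> ext f3 S" "0 \<le> ext f4 S" using nne nn by blast+
    show "ext f1 S * ext f2 T \<le> ext f3 (S \<union> T) * ext f4 (S \<inter> T)"
    proof (cases "S \<in> range phi \<and> T \<in> range phi")
      case True
      then obtain x y where xy: "S = phi x" "T = phi y" by auto
      have "S \<union> T = phi (sup x y)" "S \<inter> T = phi (inf x y)" using xy by (simp_all add: phi_sup phi_inf)
      thus ?thesis using xy h by (simp add: ext_phi)
    next
      case False
      then have "ext f1 S * ext f2 T = 0" unfolding ext_def by auto
      moreover have "0 \<le> ext f3 (S \<union> T) * ext f4 (S \<inter> T)"
        using nne[of f3] nne[of f4] nn by (simp add: mult_nonneg_nonneg)
      ultimately show ?thesis by (simp del: mult_eq_0_iff)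
    qed
  qed
  thus ?thesis by (simp add: sumext)
qed



lemma d1: fixes x y z w :: "'a::distrib_lattice" shows "inf x y = inf z w \<Longrightarrow> sup x y = sup z w \<Longrightarrow> inf (sup x z) (inf y w) = inf x y"
  by (smt (verit, del_insts) inf.idem inf_commute inf_sup_distrib2 sup_commute sup_inf_absorb)
lemma d2: fixes x y z w :: "'a::distrib_lattice" shows "inf x y = inf z w \<Longrightarrow> sup x y = sup z w \<Longrightarrow> sup (sup x z) (inf y w) = sup x y"
  by (metis (no_types, opaque_lifting) inf_sup_absorb sup.right_idem sup_assoc sup_commute sup_inf_distrib2)
lemma d3: fixes x y z w :: "'a::distrib_lattice" shows "inf x y = inf z w \<Longrightarrow> sup x y = sup z w \<Longrightarrow> inf (inf x z) (sup y w) = inf x y"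
  by (metis (no_types, lifting) inf.idem inf_commute inf_left_commute inf_sup_distrib2 sup.idem)
lemma d4: fixes x y z w :: "'a::distrib_lattice" shows "inf x y = inf z w \<Longrightarrow> sup x y = sup z w \<Longrightarrow> sup (inf x z) (sup y w) = sup x y"
  by (smt (verit, ccfv_SIG) inf_sup_absorb sup.idem sup_commute sup_inf_distrib2 sup_left_commute)
lemma cpl_u: fixes x y y' :: "'a::distrib_lattice" assumes "inf x y = inf x y'" "sup x y = sup x y'" shows "y = y'"
proof -
  have "y = inf y (sup x y)" by (simp add: inf.absorb1)
  also have "\<dots> = inf y (sup x y')" using assms by simp
  also have "\<dots> = sup (inf y x) (inf y y')" by (rule inf_sup_distrib1)
  also have "\<dots> = sup (inf x y') (inf y y')" using assms by (simp add: inf_commute)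
  also have "\<dots> = inf (sup x y) y'" by (simp add: inf_sup_distrib2)
  also have "\<dots> = inf (sup x y') y'" using assms by simp
  also have "\<dots> = y'" by (simp add: inf.absorb2)
  finally show ?thesis .
qed

lemma sum_one:
  fixes g :: "'a::finite \<Rightarrow> real"
  assumes "P y0" "\<And>y. P y \<Longrightarrow> y = y0"
  shows "(\<Sum>y\<in>UNIV. if P y then g y else 0) = g y0"
proof -
  have "(if P y then g y else 0) = (if y = y0 then g y else 0)" for y
  proof (cases "y = y0")
    case True thus ?thesis using assms(1) by simp
  next
    case False
    then have "\<not> P y" using assms(2) by blast
    thus ?thesis using False by simp
  qed
  then have "(\<Sum>y\<in>UNIV. if P y then g y else 0) = (\<Sum>y\<in>UNIV. if y = y0 then g y else 0)"
    by presburger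
  thus ?thesis by simp
qed

lemma sum_cpl:
  fixes g :: "'a::{finite,distrib_lattice} \<Rightarrow> real"
  assumes "inf x y0 = i" "sup x y0 = j"
  shows "(\<Sum>y\<in>UNIV. if inf x y = i \<and> sup x y = j then g y else 0) = g y0"
proof (rule sum_one)
  show "inf x y0 = i \<and> sup x y0 = j" using assms by simp
  fix y assume H: "inf x y = i \<and> sup x y = j"
  have "inf x y = inf x y0" "sup x y = sup x y0" using H assms by auto
  thus "y = y0" by (rule cpl_u)
qed

lemma key:
  fixes a b c d :: "'a::{finite,distrib_lattice} \<Rightarrow> real"
  assumes nn: "\<And>x. 0 \<le> a x" "\<And>x. 0 \<le> b x" "\<And>x. 0 \<le> c x" "\<And>x. 0 \<le> d x"
    and h: "\<And>x y. a x * b y \<le> c (sup x y) * d (inf x y)"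
  shows "(\<Sum>x\<in>UNIV. \<Sum>y\<in>UNIV. if inf x y = i \<and> sup x y = j then a x * b y else 0)
       \<le> (\<Sum>u\<in>UNIV. \<Sum>v\<in>UNIV. if inf u v = i \<and> sup u v = j then c u * d v else 0)"
proof -
  define F where "F x = (\<Sum>y\<in>UNIV. if inf x y = i \<and> sup x y = j then a x * b y else 0)" for x
  define H where "H z = (\<Sum>w\<in>UNIV. if inf z w = i \<and> sup z w = j then a w * b z else 0)" for z
  define G where "G u = (\<Sum>v\<in>UNIV. if inf u v = i \<and> sup u v = j then c u * d v else 0)" for u
  define G' where "G' w = (\<Sum>v\<in>UNIV. if inf w v = i \<and> sup w v = j then c v * d w else 0)" for w
  have nF: "0 \<le> F x" for x unfolding F_def using nn by (intro sum_nonneg) (simp add: mult_nonneg_nonneg)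
  have nH: "0 \<le> H x" for x unfolding H_def using nn by (intro sum_nonneg) (simp add: mult_nonneg_nonneg)
  have nG: "0 \<le> G x" for x unfolding G_def using nn by (intro sum_nonneg) (simp add: mult_nonneg_nonneg)
  have nG': "0 \<le> G' x" for x unfolding G'_def using nn by (intro sum_nonneg) (simp add: mult_nonneg_nonneg)
  have ad: "sum F UNIV * sum H UNIV \<le> sum G UNIV * sum G' UNIV"
  proof (rule ad_lat[OF nF nH nG nG'])
    fix x z
    show "F x * H z \<le> G (sup x z) * G' (inf x z)"
    proof (cases "(\<exists>y. inf x y = i \<and> sup x y = j) \<and> (\<exists>w. inf z w = i \<and> sup z w = j)")
      case True
      then obtain y w where y: "inf x y = i" "sup x y = j" and w: "inf z w = i" "sup z w = j" by blast
      have Fx: "F x = a x * b y" unfolding F_def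
        by (rule sum_cpl) (use y in simp_all)
      have Hz: "H z = a w * b z" unfolding H_def
        by (rule sum_cpl) (use w in simp_all)
      have e1: "inf (sup x z) (inf y w) = i" "sup (sup x z) (inf y w) = j"
        using d1[of x y z w] d2[of x y z w] y w by auto
      have e2: "inf (inf x z) (sup y w) = i" "sup (inf x z) (sup y w) = j"
        using d3[of x y z w] d4[of x y z w] y w by auto
      have Gs: "G (sup x z) = c (sup x z) * d (inf y w)" unfolding G_def
        by (rule sum_cpl) (use e1 in simp_all)
      have Gi: "G' (inf x z) = c (sup y w) * d (inf x z)" unfolding G'_def
        by (rule sum_cpl) (use e2 in simp_all)
      have "F x * H z = (a x * b z) * (a w * b y)" using Fx Hz by (simp add: algebra_simps)
      also have "\<dots> \<le> (c (sup x z) * d (inf x z)) * (c (sup w y) * d (inf w y))"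
      proof (rule mult_mono)
        show "a x * b z \<le> c (sup x z) * d (inf x z)" by (rule h)
        show "a w * b y \<le> c (sup w y) * d (inf w y)" by (rule h)
        show "0 \<le> c (sup x z) * d (inf x z)" by (rule mult_nonneg_nonneg[OF nn(3) nn(4)])
        show "0 \<le> a w * b y" by (rule mult_nonneg_nonneg[OF nn(1) nn(2)])
      qed
      also have "\<dots> = G (sup x z) * G' (inf x z)" using Gs Gi
        by (simp only: sup_commute[of w y] inf_commute[of w y] mult_ac)
      finally show ?thesis .
    next
      case False
      have "F x = 0 \<or> H z = 0"
      proof (cases "\<exists>y. inf x y = i \<and> sup x y = j")
        case True
        with False have nw: "\<not> (\<exists>w. inf z w = i \<and> sup z w = j)" by blast
        have "H z = 0" unfolding H_def by (rule sum.neutral) (use nw in auto)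
        thus ?thesis ..
      next
        case False
        have "F x = 0" unfolding F_def by (rule sum.neutral) (use False in auto)
        thus ?thesis ..
      qed
      moreover have "0 \<le> G (sup x z) * G' (inf x z)" using nG nG' by (simp add: mult_nonneg_nonneg)
      ultimately show ?thesis by (auto simp del: mult_eq_0_iff)
    qed
  qed
  have sH: "sum H UNIV = sum F UNIV"
  proof -
    have "sum H UNIV = (\<Sum>z\<in>UNIV. \<Sum>w\<in>UNIV. if inf w z = i \<and> sup w z = j then a w * b z else 0)"
      unfolding H_def by (intro sum.cong refl) (subst inf_commute, subst sup_commute, rule refl)
    also have "\<dots> = sum F UNIV" unfolding F_def by (rule sum.swap)
    finally show ?thesis .
  qed
  have sG: "sum G' UNIV = sum G UNIV"
  proof -
    have "sum G' UNIV = (\<Sum>w\<in>UNIV. \<Sum>v\<in>UNIV. if inf v w = i \<and> sup v w = j then c v * d w else 0)"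
      unfolding G'_def by (intro sum.cong refl) (subst inf_commute, subst sup_commute, rule refl)
    also have "\<dots> = sum G UNIV" unfolding G_def by (rule sum.swap)
    finally show ?thesis .
  qed
  have "sum F UNIV * sum F UNIV \<le> sum G UNIV * sum G UNIV" using ad unfolding sH sG .
  then have "(sum F UNIV)\<^sup>2 \<le> (sum G UNIV)\<^sup>2" by (simp only: power2_eq_square)
  moreover have "0 \<le> sum G UNIV" by (rule sum_nonneg) (rule nG)
  ultimately have "sum F UNIV \<le> sum G UNIV" by (rule power2_le_imp_le)
  thus ?thesis unfolding F_def G_def .
qed



lemma coeff_prod:
  fixes f g :: "'b \<Rightarrow> real"
  shows "coeff ((\<Sum>x\<in>A. monom (f x) (r x)) * (\<Sum>y\<in>B. monom (g y) (s y))) n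
     = (\<Sum>x\<in>A. \<Sum>y\<in>B. if r x + s y = n then f x * g y else 0)"
  by (simp add: sum_product coeff_sum mult_monom coeff_monom)

lemma rgp_univ:
  "rank_gen_poly f X = (\<Sum>x\<in>UNIV. monom (if x \<in> X then f x else 0) (lat_rank x))"
  unfolding rank_gen_poly_def by (rule sum.mono_neutral_cong_left) auto

lemma if_sum: "(if P then sum g A else (0::real)) = (\<Sum>x\<in>A. if P then g x else 0)"
  by simp

lemma group:
  fixes F :: "'a::{finite,distrib_lattice} \<Rightarrow> 'a \<Rightarrow> real"
  shows "(\<Sum>x\<in>UNIV. \<Sum>y\<in>UNIV. if lat_rank x + lat_rank y = n then F x y else 0)
       = (\<Sum>i\<in>UNIV. \<Sum>j\<in>UNIV. if lat_rank i + lat_rank j = n then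
             (\<Sum>x\<in>UNIV. \<Sum>y\<in>UNIV. if inf x y = i \<and> sup x y = j then F x y else 0) else 0)"
proof -
  have inner: "(\<Sum>i\<in>UNIV. \<Sum>j\<in>UNIV. if lat_rank i + lat_rank j = n then
             (if inf x y = i \<and> sup x y = j then F x y else 0) else 0)
        = (if lat_rank x + lat_rank y = n then F x y else 0)" for x y
  proof -
    have pt: "(if lat_rank i + lat_rank j = n then (if inf x y = i \<and> sup x y = j then F x y else 0) else 0)
      = (if j = sup x y then (if i = inf x y then (if lat_rank x + lat_rank y = n then F x y else 0) else 0) else 0)"
      for i j using rank_mod[of x y] by auto
    have "(\<Sum>i\<in>UNIV. \<Sum>j\<in>UNIV. if lat_rank i + lat_rank j = n then
             (if inf x y = i \<and> sup x y = j then F x y else 0) else 0)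
      = (\<Sum>i\<in>UNIV. \<Sum>j\<in>UNIV. (if j = sup x y then (if i = inf x y then (if lat_rank x + lat_rank y = n then F x y else 0) else 0) else 0))"
      by (simp only: pt)
    also have "\<dots> = (if lat_rank x + lat_rank y = n then F x y else 0)"
      by simp
    finally show ?thesis .
  qed
  let ?T = "\<lambda>i j x y. if lat_rank i + lat_rank j = n then (if inf x y = i \<and> sup x y = j then F x y else 0) else (0::real)"
  have "(\<Sum>i\<in>UNIV. \<Sum>j\<in>UNIV. if lat_rank i + lat_rank j = n then
             (\<Sum>x\<in>UNIV. \<Sum>y\<in>UNIV. if inf x y = i \<and> sup x y = j then F x y else 0) else 0)
       = (\<Sum>i\<in>UNIV. \<Sum>j\<in>UNIV. \<Sum>x\<in>UNIV. \<Sum>y\<in>UNIV. ?T i j x y)"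
    by (simp only: if_sum)
  also have "\<dots> = (\<Sum>i\<in>UNIV. \<Sum>x\<in>UNIV. \<Sum>j\<in>UNIV. \<Sum>y\<in>UNIV. ?T i j x y)"
    by (rule sum.cong[OF refl], rule sum.swap)
  also have "\<dots> = (\<Sum>x\<in>UNIV. \<Sum>i\<in>UNIV. \<Sum>j\<in>UNIV. \<Sum>y\<in>UNIV. ?T i j x y)"
    by (rule sum.swap)
  also have "\<dots> = (\<Sum>x\<in>UNIV. \<Sum>i\<in>UNIV. \<Sum>y\<in>UNIV. \<Sum>j\<in>UNIV. ?T i j x y)"
    by (rule sum.cong[OF refl], rule sum.cong[OF refl], rule sum.swap)
  also have "\<dots> = (\<Sum>x\<in>UNIV. \<Sum>y\<in>UNIV. \<Sum>i\<in>UNIV. \<Sum>j\<in>UNIV. ?T i j x y)"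
    by (rule sum.cong[OF refl], rule sum.swap)
  also have "\<dots> = (\<Sum>x\<in>UNIV. \<Sum>y\<in>UNIV. if lat_rank x + lat_rank y = n then F x y else 0)"
    by (rule sum.cong[OF refl], rule sum.cong[OF refl], rule inner)
  finally show ?thesis by simp
qed

theorem theorem1p5:
  fixes \<alpha> \<beta> \<gamma> \<delta> :: "'a::{finite, distrib_lattice} \<Rightarrow> real"
  assumes "\<And>x. 0 \<le> \<alpha> x" and "\<And>x. 0 \<le> \<beta> x" and "\<And>x. 0 \<le> \<gamma> x" and "\<And>x. 0 \<le> \<delta> x"
    and "\<And>x y. \<alpha> x * \<beta> y \<le> \<gamma> (sup x y) * \<delta> (inf x y)"
  shows "\<forall>X Y :: 'a set. rank_gen_poly \<alpha> X * rank_gen_poly \<beta> Y \<lless>\<^sub>c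
           rank_gen_poly \<gamma> (set_sup X Y) * rank_gen_poly \<delta> (set_inf X Y)"
proof (intro allI)
  fix X Y :: "'a set"
  define a where "a x = (if x \<in> X then \<alpha> x else 0)" for x
  define b where "b x = (if x \<in> Y then \<beta> x else 0)" for x
  define c where "c x = (if x \<in> set_sup X Y then \<gamma> x else 0)" for x
  define d where "d x = (if x \<in> set_inf X Y then \<delta> x else 0)" for x
  have na: "0 \<le> a x" for x unfolding a_def using assms(1) by simp
  have nb: "0 \<le> b x" for x unfolding b_def using assms(2) by simp
  have nc: "0 \<le> c x" for x unfolding c_def using assms(3) by simp
  have nd: "0 \<le> d x" for x unfolding d_def using assms(4) by simp
  have hh: "a x * b y \<le> c (sup x y) * d (inf x y)" for x y
  proof (cases "x \<in> X \<and> y \<in> Y")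
    case True
    then have "sup x y \<in> set_sup X Y" "inf x y \<in> set_inf X Y"
      unfolding set_sup_def set_inf_def by blast+
    thus ?thesis using True assms(5) unfolding a_def b_def c_def d_def by simp
  next
    case False
    then have "a x * b y = 0" unfolding a_def b_def by auto
    thus ?thesis using mult_nonneg_nonneg[OF nc nd, of "sup x y" "inf x y"] by linarith
  qed
  have pa: "rank_gen_poly \<alpha> X = (\<Sum>x\<in>UNIV. monom (a x) (lat_rank x))" unfolding a_def by (rule rgp_univ)
  have pb: "rank_gen_poly \<beta> Y = (\<Sum>x\<in>UNIV. monom (b x) (lat_rank x))" unfolding b_def by (rule rgp_univ)
  have pc: "rank_gen_poly \<gamma> (set_sup X Y) = (\<Sum>x\<in>UNIV. monom (c x) (lat_rank x))" unfolding c_def by (rule rgp_univ)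
  have pd: "rank_gen_poly \<delta> (set_inf X Y) = (\<Sum>x\<in>UNIV. monom (d x) (lat_rank x))" unfolding d_def by (rule rgp_univ)
  show "rank_gen_poly \<alpha> X * rank_gen_poly \<beta> Y \<lless>\<^sub>c
           rank_gen_poly \<gamma> (set_sup X Y) * rank_gen_poly \<delta> (set_inf X Y)"
    unfolding poly_coeff_le_def
  proof
    fix n
    have "coeff (rank_gen_poly \<alpha> X * rank_gen_poly \<beta> Y) n
        = (\<Sum>x\<in>UNIV. \<Sum>y\<in>UNIV. if lat_rank x + lat_rank y = n then a x * b y else 0)"
      unfolding pa pb by (rule coeff_prod)
    also have "\<dots> = (\<Sum>i\<in>UNIV. \<Sum>j\<in>UNIV. if lat_rank i + lat_rank j = n then
             (\<Sum>x\<in>UNIV. \<Sum>y\<in>UNIV. if inf x y = i \<and> sup x y = j then a x * b y else 0) else 0)"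
      by (rule group)
    also have "\<dots> \<le> (\<Sum>i\<in>UNIV. \<Sum>j\<in>UNIV. if lat_rank i + lat_rank j = n then
             (\<Sum>x\<in>UNIV. \<Sum>y\<in>UNIV. if inf x y = i \<and> sup x y = j then c x * d y else 0) else 0)"
      by (intro sum_mono) (simp add: key[where a=a and b=b and c=c and d=d, OF na nb nc nd hh])
    also have "\<dots> = (\<Sum>x\<in>UNIV. \<Sum>y\<in>UNIV. if lat_rank x + lat_rank y = n then c x * d y else 0)"
      by (rule group[symmetric])
    also have "\<dots> = coeff (rank_gen_poly \<gamma> (set_sup X Y) * rank_gen_poly \<delta> (set_inf X Y)) n"
      unfolding pc pd by (rule coeff_prod[symmetric])
    finally show "0 \<le> coeff (rank_gen_poly \<gamma> (set_sup X Y) * rank_gen_poly \<delta> (set_inf X Y)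
                   - rank_gen_poly \<alpha> X * rank_gen_poly \<beta> Y) n"
      by (simp add: coeff_diff)
  qed
qed

end
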